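(* Let $\mathcal A,\mathcal B$ be nondeterministic parity tree automata over $\Sigma$ (all states productive) with $L(\mathcal A)\cap L(\mathcal B)=\emptyset$. Then there is a function $\mathcal P:\bigcup_{a\in\Sigma}\Delta^\mathcal A(a)\times\Delta^\mathcal B(a)\to\{\mathsf L,\mathsf R\}$ with the following property: for every path $b=(a_0,d_0)(a_1,d_1)\cdots\in(\Sigma\times\{\mathsf L,\mathsf R\})^\omega$ and all sequences $\vec\delta^\mathcal A=\delta^\mathcal A_0\delta^\mathcal A_1\cdots\in\Delta^\mathcal A(b)$ and $\vec\delta^\mathcal B=\delta^\mathcal B_0\delta^\mathcal B_1\cdots\in\Delta^\mathcal B(b)$, if $\mathcal P(\delta^\mathcal A_i,\delta^\mathcal B_i)=d_i$ for every $i\in\omega$, then at least one of $\vec\delta^\mathcal A$, $\vec\delta^\mathcal B$ is rejecting.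
   Context: A nondeterministic parity tree automaton $(\Sigma,Q,q_0,\Omega,\Delta)$ has $\Omega:Q\to\mathbb N$ and $\Delta\subseteq Q\times\Sigma\times Q\times Q$; it accepts a tree $t:\{\mathsf L,\mathsf R\}^*\to\Sigma$ if there is a run $\rho$ with $\rho(\epsilon)=q_0$, $(\rho(u),t(u),\rho(u\mathsf L),\rho(u\mathsf R))\in\Delta$ for all $u$, such that on every branch the maximal priority seen infinitely often is even. $L(\cdot)$ is the recognised language; all states are assumed productive (each state accepts some tree when used as initial state). $\Delta(a)$ is the set of transitions over letter $a$. The priority of a transition $(q,a,q_\mathsf L,q_\mathsf R)$ is $\Omega(q)$; an infinite sequence of transitions is accepting iff the maximal priority occurring infinitely often is even, and rejecting otherwise. For a path $b=(a_0,d_0)(a_1,d_1)\cdots$, $\Delta(b)$ is the set of sequences $\delta_0\delta_1\cdots$ with $\delta_i=(q_i,a_i,q_{\mathsf L,i},q_{\mathsf R,i})\in\Delta$, $q_0$ the initial state, and $q_{i+1}=q_{d_i,i}$ for all $i$. *)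

theory Defs
  imports Main
begin

datatype dir = L | R

text \<open>Nondeterministic parity tree automaton (Sigma, Q, q0, Omega, Delta).
  A transition (q, a, qL, qR) is a 4-tuple.\<close>
record ('a, 'q) npta =
  alph   :: "'a set"
  states :: "'q set"
  init   :: 'q
  pri    :: "'q \<Rightarrow> nat"
  trans  :: "('q \<times> 'a \<times> 'q \<times> 'q) set"

definition wf_npta :: "('a, 'q) npta \<Rightarrow> bool" where
  "wf_npta A \<longleftrightarrow> finite (alph A) \<and> finite (states A) \<and> init A \<in> states A \<and>
     trans A \<subseteq> states A \<times> alph A \<times> states A \<times> states A"

definition parity_accepting :: "(nat \<Rightarrow> nat) \<Rightarrow> bool" where
  "parity_accepting s \<longleftrightarrow>
     (\<exists>m. even m \<and> (\<exists>\<^sub>\<infinity>n. s n = m) \<and> (\<forall>k>m. \<not> (\<exists>\<^sub>\<infinity>n. s n = k)))"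

definition is_tree :: "('a, 'q) npta \<Rightarrow> (dir list \<Rightarrow> 'a) \<Rightarrow> bool" where
  "is_tree A t \<longleftrightarrow> (\<forall>u. t u \<in> alph A)"

text \<open>Tree acceptance from state q; nodes are words over {L,R} read from the root,
  a branch is an infinite direction sequence, its n-th node is the prefix of length n.\<close>
definition accepts_from :: "('a, 'q) npta \<Rightarrow> 'q \<Rightarrow> (dir list \<Rightarrow> 'a) \<Rightarrow> bool" where
  "accepts_from A q t \<longleftrightarrow>
     (\<exists>\<rho>. \<rho> [] = q \<and>
        (\<forall>u. (\<rho> u, t u, \<rho> (u @ [L]), \<rho> (u @ [R])) \<in> trans A) \<and>
        (\<forall>br :: nat \<Rightarrow> dir. parity_accepting (\<lambda>n. pri A (\<rho> (map br [0..<n])))))"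

definition lang :: "('a, 'q) npta \<Rightarrow> (dir list \<Rightarrow> 'a) set" where
  "lang A = {t. is_tree A t \<and> accepts_from A (init A) t}"

definition all_productive :: "('a, 'q) npta \<Rightarrow> bool" where
  "all_productive A \<longleftrightarrow> (\<forall>q \<in> states A. \<exists>t. is_tree A t \<and> accepts_from A q t)"

definition trans_seqs :: "('a, 'q) npta \<Rightarrow> (nat \<Rightarrow> 'a \<times> dir) \<Rightarrow> (nat \<Rightarrow> 'q \<times> 'a \<times> 'q \<times> 'q) set" where
  "trans_seqs A b = {\<delta>. (\<forall>i. \<delta> i \<in> trans A) \<and> fst (\<delta> 0) = init A \<and>
      (\<forall>i. fst (snd (\<delta> i)) = fst (b i)) \<and>
      (\<forall>i. fst (\<delta> (Suc i)) =
             (if snd (b i) = L then fst (snd (snd (\<delta> i))) else snd (snd (snd (\<delta> i)))))}"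

text \<open>Priority of a transition is the priority of its source state.\<close>
definition seq_rejecting :: "('a, 'q) npta \<Rightarrow> (nat \<Rightarrow> 'q \<times> 'a \<times> 'q \<times> 'q) \<Rightarrow> bool" where
  "seq_rejecting A \<delta> \<longleftrightarrow> \<not> parity_accepting (\<lambda>i. pri A (fst (\<delta> i)))"

end

theory Submission
  imports Defs "HOL-Library.Infinite_Set"
begin

lemma pa_I:
  assumes "even m" "\<exists>\<^sub>\<infinity>n. s n = m" "\<forall>n\<ge>N. s n \<le> (m::nat)"
  shows "parity_accepting s"
  unfolding parity_accepting_def
proof (intro exI conjI allI impI)
  fix k assume "k > m"
  have "{n. s n = k} \<subseteq> {..<N}" using assms(3) \<open>k > m\<close> by (auto simp: not_less[symmetric])
  then have "finite {n. s n = k}" using finite_subset by blast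
  then show "\<not> (\<exists>\<^sub>\<infinity>n. s n = k)" by (simp add: frequently_cofinite)
qed (use assms in auto)

lemma pa_E:
  assumes "parity_accepting s" "finite (range s)"
  obtains m N where "even m" "\<exists>\<^sub>\<infinity>n. s n = m" "\<forall>n\<ge>N. s n \<le> (m::nat)"
proof -
  obtain m where m: "even m" "\<exists>\<^sub>\<infinity>n. s n = m" "\<forall>k>m. \<not> (\<exists>\<^sub>\<infinity>n. s n = k)"
    using assms(1) unfolding parity_accepting_def by blast
  have "{n. s n > m} = (\<Union>k\<in>range s \<inter> {m<..}. {n. s n = k})" by auto
  moreover have "finite (\<Union>k\<in>range s \<inter> {m<..}. {n. s n = k})"
    using assms(2) m(3) by (auto simp: frequently_cofinite)
  ultimately have "finite {n. s n > m}" by simp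
  then obtain N where "{n. s n > m} \<subseteq> {..<N}" using finite_nat_bounded by blast
  then have "\<forall>n\<ge>N. s n \<le> m" by (auto simp: not_le[symmetric])
  with m that show ?thesis by blast
qed

lemma c_mono:
  assumes rec: "\<And>n. c (Suc n) = c n + (if k (Suc n) then 1 else (0::nat))"
  shows "n \<le> n' \<Longrightarrow> c n \<le> c n'"
  by (rule lift_Suc_mono_le[of c]) (simp add: rec, simp)

lemma c_le:
  assumes rec: "\<And>n. c (Suc n) = c n + (if k (Suc n) then 1 else (0::nat))"
  shows "c n \<le> c 0 + n"
  by (induction n) (auto simp: rec)

lemma c_unbounded:
  assumes rec: "\<And>n. c (Suc n) = c n + (if k (Suc n) then 1 else (0::nat))"
    and inf: "infinite {n. k n}"
  shows "\<exists>n. c n \<ge> j"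
proof (induction j)
  case 0 then show ?case by auto
next
  case (Suc j)
  then obtain n where n: "c n \<ge> j" by blast
  from inf obtain i where i: "i > n" "k i"
    using INFM_nat[of k] frequently_cofinite[of k] by blast
  then obtain i' where i': "i = Suc i'" by (cases i) auto
  have "c n \<le> c i'" using c_mono[of c k, OF rec] i i' by simp
  then have "c i = c i' + 1" using rec[of i'] i i' by simp
  then show ?case using n \<open>c n \<le> c i'\<close> by (intro exI[of _ i]) simp
qed

lemma c_hit:
  assumes rec: "\<And>n. c (Suc n) = c n + (if k (Suc n) then 1 else (0::nat))"
    and inf: "infinite {n. k n}" and j: "j > c 0"
  shows "\<exists>n. k n \<and> c n = j"
proof -
  obtain n0 where "c n0 \<ge> j" using c_unbounded[of c k, OF rec inf] by blast
  define n where "n = (LEAST n. c n \<ge> j)"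
  have cn: "c n \<ge> j" unfolding n_def by (rule LeastI[of _ n0]) fact
  have "n \<noteq> 0"
  proof
    assume "n = 0" then show False using cn j by simp
  qed
  then obtain n' where n': "n = Suc n'" by (cases n) auto
  have "\<not> c n' \<ge> j" using not_less_Least[of n' "\<lambda>n. j \<le> c n"] n' unfolding n_def by simp
  then show ?thesis using rec[of n'] cn n' by (intro exI[of _ n]) (auto split: if_splits)
qed

lemma mode_inf:
  assumes rec: "\<And>n. c (Suc n) = c n + (if k (Suc n) then 1 else (0::nat))"
    and inf: "infinite {n. k n}" and t: "\<exists>\<^sub>\<infinity>j. t j = v"
    and s: "\<And>n. k n \<Longrightarrow> s n = t (c n)"
  shows "\<exists>\<^sub>\<infinity>n. s n = v"
  unfolding INFM_nat
proof
  fix m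
  obtain j where j: "j > c 0 + m" "t j = v" using t unfolding INFM_nat by blast
  obtain n where n: "k n" "c n = j" using c_hit[of c k, OF rec inf, of j] j by auto
  have "c n \<le> c 0 + n" by (rule c_le[of c k, OF rec])
  then show "\<exists>n>m. s n = v" using n j s[of n] by (intro exI[of _ n]) auto
qed

lemma mode_ev:
  assumes rec: "\<And>n. c (Suc n) = c n + (if k (Suc n) then 1 else (0::nat))"
    and inf: "infinite {n. k n}" and t: "\<forall>j\<ge>J. t j \<le> (v::nat)"
    and s: "\<And>n. k n \<Longrightarrow> s n = t (c n)"
  shows "\<exists>N. \<forall>n\<ge>N. k n \<longrightarrow> s n \<le> v"
proof -
  obtain N where N: "c N \<ge> J" using c_unbounded[of c k, OF rec inf] by blast
  have "\<forall>n\<ge>N. k n \<longrightarrow> s n \<le> v"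
  proof (intro allI impI)
    fix n assume "n \<ge> N" "k n"
    then have "c n \<ge> J" using c_mono[of c k, OF rec, of N n] N by simp
    then show "s n \<le> v" using t s \<open>k n\<close> by simp
  qed
  then show ?thesis by blast
qed

lemma mode_fin: "finite {n. k n} \<Longrightarrow> \<exists>N. \<forall>n\<ge>N. \<not> k (n::nat)"
proof -
  assume "finite {n. k n}"
  then obtain K where "{n. k n} \<subseteq> {..<K}" using finite_nat_bounded by blast
  then show ?thesis by (intro exI[of _ K]) auto
qed

lemma interleave_pa:
  assumes r1: "\<And>n. c1 (Suc n) = c1 n + (if k (Suc n) then 1 else (0::nat))"
    and r2: "\<And>n. c2 (Suc n) = c2 n + (if \<not> k (Suc n) then 1 else (0::nat))"
    and s1': "\<And>n. infinite {n. k n} \<Longrightarrow> k n \<Longrightarrow> s n = t1 (c1 n)"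
    and s2': "\<And>n. infinite {n. \<not> k n} \<Longrightarrow> \<not> k n \<Longrightarrow> s n = t2 (c2 n)"
    and h1: "infinite {n. k n} \<Longrightarrow> even m1 \<and> (\<exists>\<^sub>\<infinity>j. t1 j = m1) \<and> (\<forall>j\<ge>J1. t1 j \<le> (m1::nat))"
    and h2: "infinite {n. \<not> k n} \<Longrightarrow> even m2 \<and> (\<exists>\<^sub>\<infinity>j. t2 j = m2) \<and> (\<forall>j\<ge>J2. t2 j \<le> (m2::nat))"
  shows "parity_accepting s"
proof -
  consider "infinite {n. k n}" "infinite {n. \<not> k n}" | "infinite {n. k n}" "finite {n. \<not> k n}"
    | "finite {n. k n}" "infinite {n. \<not> k n}" | "finite {n. k n}" "finite {n. \<not> k n}" by blast
  then show ?thesis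
  proof cases
    case 1
    have s1: "\<And>n. k n \<Longrightarrow> s n = t1 (c1 n)" if "infinite {n. k n}" using s1' that by blast
    have s2: "\<And>n. \<not> k n \<Longrightarrow> s n = t2 (c2 n)" if "infinite {n. \<not> k n}" using s2' that by blast
    from h1 1 have H1: "even m1" "\<exists>\<^sub>\<infinity>j. t1 j = m1" "\<forall>j\<ge>J1. t1 j \<le> m1" by auto
    from h2 1 have H2: "even m2" "\<exists>\<^sub>\<infinity>j. t2 j = m2" "\<forall>j\<ge>J2. t2 j \<le> m2" by auto
    obtain N1 where N1: "\<forall>n\<ge>N1. k n \<longrightarrow> s n \<le> m1" using mode_ev[of c1 k J1 t1 m1 s, OF r1 1(1) H1(3) s1[OF 1(1)]] by blast
    obtain N2 where N2: "\<forall>n\<ge>N2. \<not> k n \<longrightarrow> s n \<le> m2" using mode_ev[of c2 "\<lambda>n. \<not> k n" J2 t2 m2 s, OF r2 1(2) H2(3) s2[OF 1(2)]] by blast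
    have i1: "\<exists>\<^sub>\<infinity>n. s n = m1" using mode_inf[of c1 k t1 m1 s, OF r1 1(1) H1(2) s1[OF 1(1)]] .
    have i2: "\<exists>\<^sub>\<infinity>n. s n = m2" using mode_inf[of c2 "\<lambda>n. \<not> k n" t2 m2 s, OF r2 1(2) H2(2) s2[OF 1(2)]] .
    have ev: "\<forall>n\<ge>max N1 N2. s n \<le> max m1 m2"
    proof (intro allI impI)
      fix n assume "n \<ge> max N1 N2"
      then show "s n \<le> max m1 m2" using N1 N2 by (cases "k n") force+
    qed
    show ?thesis
    proof (cases "m1 \<le> m2")
      case True then show ?thesis using pa_I[of m2 s "max N1 N2"] ev i2 H2 by (simp add: max_def)
    next
      case False then show ?thesis using pa_I[of m1 s "max N1 N2"] ev i1 H1 by (simp add: max_def)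
    qed
  next
    case 2
    have s1: "\<And>n. k n \<Longrightarrow> s n = t1 (c1 n)" if "infinite {n. k n}" using s1' that by blast
    have s2: "\<And>n. \<not> k n \<Longrightarrow> s n = t2 (c2 n)" if "infinite {n. \<not> k n}" using s2' that by blast
    from h1 2 have H1: "even m1" "\<exists>\<^sub>\<infinity>j. t1 j = m1" "\<forall>j\<ge>J1. t1 j \<le> m1" by auto
    obtain N1 where N1: "\<forall>n\<ge>N1. k n \<longrightarrow> s n \<le> m1" using mode_ev[of c1 k J1 t1 m1 s, OF r1 2(1) H1(3) s1[OF 2(1)]] by blast
    obtain N2 where N2: "\<forall>n\<ge>N2. \<not> \<not> k n" using mode_fin[of "\<lambda>n. \<not> k n", OF 2(2)] by blast
    have i1: "\<exists>\<^sub>\<infinity>n. s n = m1" using mode_inf[of c1 k t1 m1 s, OF r1 2(1) H1(2) s1[OF 2(1)]] .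
    have "\<forall>n\<ge>max N1 N2. s n \<le> m1" using N1 N2 by simp
    then show ?thesis using pa_I[of m1 s "max N1 N2"] i1 H1 by blast
  next
    case 3
    have s1: "\<And>n. k n \<Longrightarrow> s n = t1 (c1 n)" if "infinite {n. k n}" using s1' that by blast
    have s2: "\<And>n. \<not> k n \<Longrightarrow> s n = t2 (c2 n)" if "infinite {n. \<not> k n}" using s2' that by blast
    from h2 3 have H2: "even m2" "\<exists>\<^sub>\<infinity>j. t2 j = m2" "\<forall>j\<ge>J2. t2 j \<le> m2" by auto
    obtain N1 where N1: "\<forall>n\<ge>N1. \<not> k n \<longrightarrow> s n \<le> m2" using mode_ev[of c2 "\<lambda>n. \<not> k n" J2 t2 m2 s, OF r2 3(2) H2(3) s2[OF 3(2)]] by blast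
    obtain N2 where N2: "\<forall>n\<ge>N2. \<not> k n" using mode_fin[of k, OF 3(1)] by blast
    have i2: "\<exists>\<^sub>\<infinity>n. s n = m2" using mode_inf[of c2 "\<lambda>n. \<not> k n" t2 m2 s, OF r2 3(2) H2(2) s2[OF 3(2)]] .
    have "\<forall>n\<ge>max N1 N2. s n \<le> m2" using N1 N2 by simp
    then show ?thesis using pa_I[of m2 s "max N1 N2"] i2 H2 by blast
  next
    case 4
    then have "finite ({n. k n} \<union> {n. \<not> k n})" by blast
    moreover have "{n. k n} \<union> {n. \<not> k n} = (UNIV :: nat set)" by blast
    ultimately show ?thesis by simp
  qed
qed



definition tgt :: "dir \<Rightarrow> ('s \<times> 'b \<times> 's \<times> 's) \<Rightarrow> 's" where
  "tgt d x = (if d = L then fst (snd (snd x)) else snd (snd (snd x)))"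

definition pfx :: "(nat \<Rightarrow> dir) \<Rightarrow> nat \<Rightarrow> dir list" where
  "pfx br n = map br [0..<n]"

definition cons_h :: "('m \<Rightarrow> dir set) \<Rightarrow> (dir list \<Rightarrow> 'm) \<Rightarrow> dir list \<Rightarrow> bool" where
  "cons_h D \<sigma> u \<longleftrightarrow> (\<forall>i<length u. u ! i \<in> D (\<sigma> (take i u)))"

lemma pfx_Suc[simp]: "pfx br (Suc n) = pfx br n @ [br n]"
  by (simp add: pfx_def)
lemma pfx_0[simp]: "pfx br 0 = []" by (simp add: pfx_def)
lemma length_pfx[simp]: "length (pfx br n) = n" by (simp add: pfx_def)

lemma cons_Nil[simp]: "cons_h D \<sigma> []" by (simp add: cons_h_def)

lemma cons_snoc[simp]: "cons_h D \<sigma> (u @ [d]) \<longleftrightarrow> cons_h D \<sigma> u \<and> d \<in> D (\<sigma> u)"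
  unfolding cons_h_def by (auto simp: nth_append less_Suc_eq)

lemma cons_pfx: "cons_h D \<sigma> (pfx br n) \<longleftrightarrow> (\<forall>i<n. br i \<in> D (\<sigma> (pfx br i)))"
  by (induction n) (auto simp: less_Suc_eq)

lemma limit_branch:
  assumes step: "\<And>n. xs (Suc n) = xs n \<or> (\<exists>d. xs (Suc n) = xs n @ [d])"
    and unb: "\<And>j. \<exists>n. length (xs n) \<ge> j"
  shows "\<exists>br. \<forall>n. pfx br (length (xs n)) = xs n"
proof -
  have mono: "\<exists>z. xs n' = xs n @ z" if "n \<le> n'" for n n'
    using that
  proof (induction rule: dec_induct)
    case base then show ?case by auto
  next
    case (step m)
    then obtain z where z: "xs m = xs n @ z" by blast
    from step.hyps z assms(1)[of m] show ?case by (metis append.assoc)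
  qed
  have agree: "xs n ! i = xs n' ! i" if "i < length (xs n)" "i < length (xs n')" for i n n'
  proof (cases "n \<le> n'")
    case True
    then obtain z where "xs n' = xs n @ z" using mono by blast
    then show ?thesis using that by (simp add: nth_append)
  next
    case False
    then obtain z where "xs n = xs n' @ z" using mono[of n' n] by auto
    then show ?thesis using that by (simp add: nth_append)
  qed
  define br where "br i = xs (SOME n. length (xs n) > i) ! i" for i
  have brv: "br i = xs n ! i" if "i < length (xs n)" for i n
  proof -
    have ex: "\<exists>n. length (xs n) > i" using unb[of "Suc i"] by (auto simp: Suc_le_eq)
    have "length (xs (SOME n. length (xs n) > i)) > i" using someI_ex[OF ex] .
    then show ?thesis unfolding br_def using agree that by blast
  qed
  have "\<forall>n. pfx br (length (xs n)) = xs n"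
  proof
    fix n show "pfx br (length (xs n)) = xs n"
      by (rule nth_equalityI) (auto simp: pfx_def brv)
  qed
  then show ?thesis by blast
qed

lemma limit_branch_cons:
  assumes "\<forall>n. pfx br (length (xs n)) = xs n" "\<And>j. \<exists>n. length (xs n) \<ge> j"
    "\<And>n. cons_h D \<sigma> (xs n)"
  shows "br i \<in> D (\<sigma> (pfx br i))"
proof -
  obtain n where n: "length (xs n) \<ge> Suc i" using assms(2) by blast
  have "cons_h D \<sigma> (pfx br (length (xs n)))" using assms(1,3) by simp
  then show ?thesis using n cons_pfx by (metis Suc_le_eq)
qed

lemma interleave_strat:
  fixes f :: "'m \<Rightarrow> nat"
  assumes Xa: "\<And>n. Xa (Suc n) = (if K (Suc n) then Xa n @ [br n] else Xa n)"
    and Xb: "\<And>n. Xb (Suc n) = (if K (Suc n) then Xb n else Xb n @ [br n])"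
    and C1: "\<And>n. cons_h Da sa (Xa n)" and C2: "\<And>n. cons_h Db sb (Xb n)"
    and W1: "\<And>b. (\<forall>n. b n \<in> Da (sa (pfx b n))) \<Longrightarrow> parity_accepting (\<lambda>n. f (sa (pfx b n)))"
    and W2: "\<And>b. (\<forall>n. b n \<in> Db (sb (pfx b n))) \<Longrightarrow> parity_accepting (\<lambda>n. f (sb (pfx b n)))"
    and F1: "\<And>u. cons_h Da sa u \<Longrightarrow> f (sa u) \<in> F"
    and F2: "\<And>u. cons_h Db sb u \<Longrightarrow> f (sb u) \<in> F"
    and fin: "finite F"
    and g: "\<And>n. g n = (if K n then f (sa (Xa n)) else f (sb (Xb n)))"
  shows "parity_accepting g"
proof -
  define c1 where "c1 n = length (Xa n)" for n
  define c2 where "c2 n = length (Xb n)" for n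
  have r1: "\<And>n. c1 (Suc n) = c1 n + (if K (Suc n) then 1 else 0)" by (simp add: c1_def Xa)
  have r2: "\<And>n. c2 (Suc n) = c2 n + (if \<not> K (Suc n) then 1 else 0)" by (simp add: c2_def Xb)
  have ex1: "\<exists>m1 J1 t1. (infinite {n. K n} \<longrightarrow> even m1 \<and> (\<exists>\<^sub>\<infinity>j. t1 j = m1) \<and> (\<forall>j\<ge>J1. t1 j \<le> m1))
     \<and> (\<forall>n. infinite {n. K n} \<longrightarrow> K n \<longrightarrow> g n = t1 (c1 n))"
  proof (cases "infinite {n. K n}")
    case True
    have unb: "\<And>j. \<exists>n. length (Xa n) \<ge> j" using c_unbounded[of c1 K, OF r1 True] c1_def by auto
    obtain b where b: "\<forall>n. pfx b (length (Xa n)) = Xa n"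
      using limit_branch[of Xa, OF _ unb] Xa by metis
    have bc: "\<forall>n. b n \<in> Da (sa (pfx b n))" using limit_branch_cons[OF b unb C1] by blast
    define t1 where "t1 = (\<lambda>j. f (sa (pfx b j)))"
    have pa: "parity_accepting t1" using W1[OF bc] by (simp add: t1_def)
    have "range t1 \<subseteq> F" using F1 bc by (auto simp: t1_def cons_pfx)
    then have "finite (range t1)" using fin finite_subset by blast
    then obtain m1 J1 where "even m1" "\<exists>\<^sub>\<infinity>j. t1 j = m1" "\<forall>j\<ge>J1. t1 j \<le> m1" using pa_E[OF pa] by blast
    moreover have "\<forall>n. K n \<longrightarrow> g n = t1 (c1 n)" using g b by (simp add: t1_def c1_def)
    ultimately show ?thesis by blast
  qed auto
  have ex2: "\<exists>m2 J2 t2. (infinite {n. \<not> K n} \<longrightarrow> even m2 \<and> (\<exists>\<^sub>\<infinity>j. t2 j = m2) \<and> (\<forall>j\<ge>J2. t2 j \<le> m2))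
     \<and> (\<forall>n. infinite {n. \<not> K n} \<longrightarrow> \<not> K n \<longrightarrow> g n = t2 (c2 n))"
  proof (cases "infinite {n. \<not> K n}")
    case True
    have unb: "\<And>j. \<exists>n. length (Xb n) \<ge> j" using c_unbounded[of c2 "\<lambda>n. \<not> K n", OF r2 True] c2_def by auto
    obtain b where b: "\<forall>n. pfx b (length (Xb n)) = Xb n"
      using limit_branch[of Xb, OF _ unb] Xb by metis
    have bc: "\<forall>n. b n \<in> Db (sb (pfx b n))" using limit_branch_cons[OF b unb C2] by blast
    define t2 where "t2 = (\<lambda>j. f (sb (pfx b j)))"
    have pa: "parity_accepting t2" using W2[OF bc] by (simp add: t2_def)
    have "range t2 \<subseteq> F" using F2 bc by (auto simp: t2_def cons_pfx)
    then have "finite (range t2)" using fin finite_subset by blast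
    then obtain m2 J2 where "even m2" "\<exists>\<^sub>\<infinity>j. t2 j = m2" "\<forall>j\<ge>J2. t2 j \<le> m2" using pa_E[OF pa] by blast
    moreover have "\<forall>n. \<not> K n \<longrightarrow> g n = t2 (c2 n)" using g b by (simp add: t2_def c2_def)
    ultimately show ?thesis by blast
  qed auto
  from ex1 ex2 obtain m1 J1 t1 m2 J2 t2 where
    h1: "infinite {n. K n} \<Longrightarrow> even m1 \<and> (\<exists>\<^sub>\<infinity>j. t1 j = m1) \<and> (\<forall>j\<ge>J1. t1 j \<le> m1)"
    and s1: "\<And>n. infinite {n. K n} \<Longrightarrow> K n \<Longrightarrow> g n = t1 (c1 n)"
    and h2: "infinite {n. \<not> K n} \<Longrightarrow> even m2 \<and> (\<exists>\<^sub>\<infinity>j. t2 j = m2) \<and> (\<forall>j\<ge>J2. t2 j \<le> m2)"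
    and s2: "\<And>n. infinite {n. \<not> K n} \<Longrightarrow> \<not> K n \<Longrightarrow> g n = t2 (c2 n)"
    by blast
  show ?thesis by (rule interleave_pa[of c1 K c2 g t1 t2 m1 J1 m2 J2, OF r1 r2 s1 s2 h1 h2])
qed



definition Mv :: "('a, 'q) npta \<Rightarrow> ('a, 'p) npta \<Rightarrow> (('q \<times> 'a \<times> 'q \<times> 'q) \<times> ('p \<times> 'a \<times> 'p \<times> 'p)) set" where
  "Mv A B = {m. fst m \<in> trans A \<and> snd m \<in> trans B \<and> fst (snd (fst m)) = fst (snd (snd m))}"

definition eve :: "('a, 'q) npta \<Rightarrow> ('a, 'p) npta \<Rightarrow> ((('q \<times> 'a \<times> 'q \<times> 'q) \<times> ('p \<times> 'a \<times> 'p \<times> 'p)) \<Rightarrow> dir set)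
   \<Rightarrow> (dir list \<Rightarrow> (('q \<times> 'a \<times> 'q \<times> 'q) \<times> ('p \<times> 'a \<times> 'p \<times> 'p))) \<Rightarrow> bool" where
  "eve A B D \<sigma> \<longleftrightarrow>
    \<sigma> [] \<in> Mv A B \<and> fst (fst (\<sigma> [])) = init A \<and> fst (snd (\<sigma> [])) = init B \<and>
    (\<forall>u d. cons_h D \<sigma> u \<longrightarrow> d \<in> D (\<sigma> u) \<longrightarrow> \<sigma> (u @ [d]) \<in> Mv A B \<and>
        fst (fst (\<sigma> (u @ [d]))) = tgt d (fst (\<sigma> u)) \<and> fst (snd (\<sigma> (u @ [d]))) = tgt d (snd (\<sigma> u))) \<and>
    (\<forall>br. (\<forall>n. br n \<in> D (\<sigma> (pfx br n))) \<longrightarrow>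
        parity_accepting (\<lambda>n. pri A (fst (fst (\<sigma> (pfx br n))))) \<and>
        parity_accepting (\<lambda>n. pri B (fst (snd (\<sigma> (pfx br n))))))"

definition adam :: "('a, 'q) npta \<Rightarrow> ('a, 'p) npta \<Rightarrow> (('q \<times> 'a \<times> 'q \<times> 'q) \<Rightarrow> ('p \<times> 'a \<times> 'p \<times> 'p) \<Rightarrow> dir) \<Rightarrow> bool" where
  "adam A B P \<longleftrightarrow> (\<forall>b :: nat \<Rightarrow> 'a \<times> dir. (\<forall>i. fst (b i) \<in> alph A) \<longrightarrow>
       (\<forall>\<delta>A \<in> trans_seqs A b. \<forall>\<delta>B \<in> trans_seqs B b.
          (\<forall>i. P (\<delta>A i) (\<delta>B i) = snd (b i)) \<longrightarrow>
          seq_rejecting A \<delta>A \<or> seq_rejecting B \<delta>B))"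

lemma eve_M:
  assumes "eve A B D \<sigma>" shows "cons_h D \<sigma> u \<Longrightarrow> \<sigma> u \<in> Mv A B"
proof (induction u rule: rev_induct)
  case Nil then show ?case using assms by (simp add: eve_def)
next
  case (snoc x xs) then show ?case using assms unfolding eve_def by simp
qed

lemma eve_mono:
  assumes e: "eve A B D' \<sigma>" and same: "\<And>m. m \<noteq> m0 \<Longrightarrow> D' m = D m"
    and nev: "\<And>h. cons_h D' \<sigma> h \<Longrightarrow> \<sigma> h \<noteq> m0"
  shows "eve A B D \<sigma>"
proof -
  have cc: "cons_h D \<sigma> h \<Longrightarrow> cons_h D' \<sigma> h" for h
  proof (induction h rule: rev_induct)
    case (snoc x xs) then show ?case using nev same by auto
  qed simp
  have ct: "cons_h D \<sigma> h \<Longrightarrow> D (\<sigma> h) = D' (\<sigma> h)" for h using cc nev same by metis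
  show ?thesis unfolding eve_def
  proof (intro conjI allI impI)
    fix br assume "\<forall>n. br n \<in> D (\<sigma> (pfx br n))"
    then have "cons_h D \<sigma> (pfx br (Suc n))" for n using cons_pfx by blast
    then have "cons_h D' \<sigma> (pfx br (Suc n))" for n using cc by blast
    then have "\<forall>n. br n \<in> D' (\<sigma> (pfx br n))" by simp
    then show "parity_accepting (\<lambda>n. pri A (fst (fst (\<sigma> (pfx br n)))))"
      "parity_accepting (\<lambda>n. pri B (fst (snd (\<sigma> (pfx br n)))))" using e unfolding eve_def by blast+
  next
    fix u d assume "cons_h D \<sigma> u" "d \<in> D (\<sigma> u)"
    then have "cons_h D' \<sigma> u" "d \<in> D' (\<sigma> u)" using cc ct by auto
    then show "\<sigma> (u @ [d]) \<in> Mv A B" "fst (fst (\<sigma> (u @ [d]))) = tgt d (fst (\<sigma> u))"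
      "fst (snd (\<sigma> (u @ [d]))) = tgt d (snd (\<sigma> u))" using e unfolding eve_def by blast+
  qed (use e in \<open>auto simp: eve_def\<close>)
qed

definition ccur :: "(dir list \<Rightarrow> 'm) \<Rightarrow> (dir list \<Rightarrow> 'm) \<Rightarrow> bool \<times> dir list \<times> dir list \<Rightarrow> 'm" where
  "ccur \<sigma>1 \<sigma>2 st = (if fst st then \<sigma>1 (fst (snd st)) else \<sigma>2 (snd (snd st)))"

definition cstep :: "(dir list \<Rightarrow> 'm) \<Rightarrow> (dir list \<Rightarrow> 'm) \<Rightarrow> 'm \<Rightarrow> bool \<times> dir list \<times> dir list \<Rightarrow> dir
    \<Rightarrow> bool \<times> dir list \<times> dir list" where
  "cstep \<sigma>1 \<sigma>2 m0 st d = (let k' = (if ccur \<sigma>1 \<sigma>2 st = m0 then d = L else fst st) in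
     (k', if k' then fst (snd st) @ [d] else fst (snd st), if k' then snd (snd st) else snd (snd st) @ [d]))"

definition cst :: "(dir list \<Rightarrow> 'm) \<Rightarrow> (dir list \<Rightarrow> 'm) \<Rightarrow> 'm \<Rightarrow> dir list \<Rightarrow> dir list \<Rightarrow> bool \<times> dir list \<times> dir list" where
  "cst \<sigma>1 \<sigma>2 m0 h2 u = foldl (cstep \<sigma>1 \<sigma>2 m0) (True, [], h2) u"

definition comb :: "(dir list \<Rightarrow> 'm) \<Rightarrow> (dir list \<Rightarrow> 'm) \<Rightarrow> 'm \<Rightarrow> dir list \<Rightarrow> dir list \<Rightarrow> 'm" where
  "comb \<sigma>1 \<sigma>2 m0 h2 u = ccur \<sigma>1 \<sigma>2 (cst \<sigma>1 \<sigma>2 m0 h2 u)"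

lemma cst_Nil[simp]: "cst \<sigma>1 \<sigma>2 m0 h2 [] = (True, [], h2)" by (simp add: cst_def)
lemma cst_snoc[simp]: "cst \<sigma>1 \<sigma>2 m0 h2 (u @ [d]) = cstep \<sigma>1 \<sigma>2 m0 (cst \<sigma>1 \<sigma>2 m0 h2 u) d"
  by (simp add: cst_def)

lemma comb_step:
  assumes "D m0 = UNIV" "D1 m0 = {L}" "D2 m0 = {R}" "\<forall>m. m \<noteq> m0 \<longrightarrow> D1 m = D m" "\<forall>m. m \<noteq> m0 \<longrightarrow> D2 m = D m" "\<not> k \<longrightarrow> \<sigma>1 x1 = m0" "k \<longrightarrow> \<sigma>2 x2 = m0" "d \<in> D (ccur \<sigma>1 \<sigma>2 (k, x1, x2))"
  shows "(fst (cstep \<sigma>1 \<sigma>2 m0 (k, x1, x2) d) \<longrightarrow> \<sigma>1 x1 = ccur \<sigma>1 \<sigma>2 (k, x1, x2) \<and> d \<in> D1 (\<sigma>1 x1)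
           \<and> cstep \<sigma>1 \<sigma>2 m0 (k, x1, x2) d = (True, x1 @ [d], x2)) \<and>
         (\<not> fst (cstep \<sigma>1 \<sigma>2 m0 (k, x1, x2) d) \<longrightarrow> \<sigma>2 x2 = ccur \<sigma>1 \<sigma>2 (k, x1, x2) \<and> d \<in> D2 (\<sigma>2 x2)
           \<and> cstep \<sigma>1 \<sigma>2 m0 (k, x1, x2) d = (False, x1, x2 @ [d])) \<and>
         (fst (cstep \<sigma>1 \<sigma>2 m0 (k, x1, x2) d) \<noteq> k \<longrightarrow> ccur \<sigma>1 \<sigma>2 (k, x1, x2) = m0)"
proof -
  let ?c = "ccur \<sigma>1 \<sigma>2 (k, x1, x2)"
  have cdef: "?c = (if k then \<sigma>1 x1 else \<sigma>2 x2)" by (simp add: ccur_def)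
  have st: "cstep \<sigma>1 \<sigma>2 m0 (k, x1, x2) d = (let k' = (if ?c = m0 then d = L else k) in
     (k', if k' then x1 @ [d] else x1, if k' then x2 else x2 @ [d]))" by (simp add: cstep_def Let_def)
  show ?thesis
  proof (cases "?c = m0")
    case True
    then show ?thesis using assms(1-3,6,7) by (cases d; cases k) (simp_all add: cstep_def ccur_def Let_def)
  next
    case False
    then show ?thesis using assms(4,5,8) by (cases k) (simp_all add: cstep_def ccur_def Let_def)
  qed
qed

lemma comb_inv:
  assumes U: "D m0 = UNIV" "D1 m0 = {L}" "D2 m0 = {R}" "\<forall>m. m \<noteq> m0 \<longrightarrow> D1 m = D m" "\<forall>m. m \<noteq> m0 \<longrightarrow> D2 m = D m"
    and h2: "cons_h D2 \<sigma>2 h2" "\<sigma>2 h2 = m0"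
  shows "cons_h D (comb \<sigma>1 \<sigma>2 m0 h2) u \<Longrightarrow> cst \<sigma>1 \<sigma>2 m0 h2 u = (k, x1, x2) \<Longrightarrow>
    cons_h D1 \<sigma>1 x1 \<and> cons_h D2 \<sigma>2 x2 \<and> (\<not> k \<longrightarrow> \<sigma>1 x1 = m0) \<and> (k \<longrightarrow> \<sigma>2 x2 = m0)"
proof (induction u arbitrary: k x1 x2 rule: rev_induct)
  case Nil
  then have "k" "x1 = []" "x2 = h2" by auto
  then show ?case using h2 by simp
next
  case (snoc d u)
  obtain k0 y1 y2 where st: "cst \<sigma>1 \<sigma>2 m0 h2 u = (k0, y1, y2)" by (cases "cst \<sigma>1 \<sigma>2 m0 h2 u") auto
  from snoc.prems(1) have cu: "cons_h D (comb \<sigma>1 \<sigma>2 m0 h2) u" and du0: "d \<in> D (comb \<sigma>1 \<sigma>2 m0 h2 u)"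
    by auto
  have du: "d \<in> D (ccur \<sigma>1 \<sigma>2 (k0, y1, y2))" using du0 st by (simp add: comb_def)
  have IH: "cons_h D1 \<sigma>1 y1" "cons_h D2 \<sigma>2 y2" "\<not> k0 \<longrightarrow> \<sigma>1 y1 = m0" "k0 \<longrightarrow> \<sigma>2 y2 = m0"
    using snoc.IH[OF cu st] by auto
  note cs = comb_step[OF U IH(3,4) du]
  have eq: "cstep \<sigma>1 \<sigma>2 m0 (k0, y1, y2) d = (k, x1, x2)" using snoc.prems(2) st by simp
  have f: "fst (cstep \<sigma>1 \<sigma>2 m0 (k0, y1, y2) d) = k" using eq by simp
  have sw: "k \<noteq> k0 \<Longrightarrow> ccur \<sigma>1 \<sigma>2 (k0, y1, y2) = m0" using cs f by blast
  show ?case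
  proof (cases k)
    case True
    then have A: "\<sigma>1 y1 = ccur \<sigma>1 \<sigma>2 (k0, y1, y2)" "d \<in> D1 (\<sigma>1 y1)"
      "cstep \<sigma>1 \<sigma>2 m0 (k0, y1, y2) d = (True, y1 @ [d], y2)" using cs f by auto
    then have x: "x1 = y1 @ [d]" "x2 = y2" using eq by auto
    have "\<sigma>2 y2 = m0"
    proof (cases k0)
      case True then show ?thesis using IH(4) by simp
    next
      case False then show ?thesis using sw \<open>k\<close> by (simp add: ccur_def)
    qed
    then show ?thesis using IH A x True by simp
  next
    case False
    then have A: "\<sigma>2 y2 = ccur \<sigma>1 \<sigma>2 (k0, y1, y2)" "d \<in> D2 (\<sigma>2 y2)"
      "cstep \<sigma>1 \<sigma>2 m0 (k0, y1, y2) d = (False, y1, y2 @ [d])" using cs f by auto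
    then have x: "x1 = y1" "x2 = y2 @ [d]" using eq by auto
    have "\<sigma>1 y1 = m0"
    proof (cases k0)
      case False then show ?thesis using IH(3) by simp
    next
      case True then show ?thesis using sw \<open>\<not> k\<close> by (simp add: ccur_def)
    qed
    then show ?thesis using IH A x False by simp
  qed
qed



lemma wf_src: "wf_npta A \<Longrightarrow> x \<in> trans A \<Longrightarrow> fst x \<in> states A \<and> fst (snd x) \<in> alph A"
  unfolding wf_npta_def by auto

lemma comb_wins:
  fixes A :: "('a, 'q) npta" and B :: "('a, 'p) npta"
  assumes wfA: "wf_npta A" and wfB: "wf_npta B"
    and e1: "eve A B D1 \<sigma>1" and e2: "eve A B D2 \<sigma>2"
    and U: "D m0 = UNIV" "D1 m0 = {L}" "D2 m0 = {R}" "\<forall>m. m \<noteq> m0 \<longrightarrow> D1 m = D m" "\<forall>m. m \<noteq> m0 \<longrightarrow> D2 m = D m"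
    and h2: "cons_h D2 \<sigma>2 h2" "\<sigma>2 h2 = m0"
  shows "eve A B D (comb \<sigma>1 \<sigma>2 m0 h2)"
proof -
  let ?\<sigma> = "comb \<sigma>1 \<sigma>2 m0 h2"
  note inv = comb_inv[of D m0 D1 D2 \<sigma>2 h2 \<sigma>1, OF U h2]
  have stp: "(fst (cstep \<sigma>1 \<sigma>2 m0 (k, x1, x2) d) \<longrightarrow> \<sigma>1 x1 = ?\<sigma> u \<and> d \<in> D1 (\<sigma>1 x1) \<and> cons_h D1 \<sigma>1 x1
           \<and> cst \<sigma>1 \<sigma>2 m0 h2 (u @ [d]) = (True, x1 @ [d], x2)) \<and>
         (\<not> fst (cstep \<sigma>1 \<sigma>2 m0 (k, x1, x2) d) \<longrightarrow> \<sigma>2 x2 = ?\<sigma> u \<and> d \<in> D2 (\<sigma>2 x2) \<and> cons_h D2 \<sigma>2 x2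
           \<and> cst \<sigma>1 \<sigma>2 m0 h2 (u @ [d]) = (False, x1, x2 @ [d]))"
    if c: "cons_h D ?\<sigma> u" and d: "d \<in> D (?\<sigma> u)" and st: "cst \<sigma>1 \<sigma>2 m0 h2 u = (k, x1, x2)" for u d k x1 x2
  proof -
    have I: "cons_h D1 \<sigma>1 x1" "cons_h D2 \<sigma>2 x2" "\<not> k \<longrightarrow> \<sigma>1 x1 = m0" "k \<longrightarrow> \<sigma>2 x2 = m0"
      using inv[OF c st] by auto
    have cu: "?\<sigma> u = ccur \<sigma>1 \<sigma>2 (k, x1, x2)" using st by (simp add: comb_def)
    have d': "d \<in> D (ccur \<sigma>1 \<sigma>2 (k, x1, x2))" using d cu by simp
    note cs = comb_step[of D m0 D1 D2 k \<sigma>1 x1 \<sigma>2 x2 d, OF U I(3,4) d']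
    have e: "cst \<sigma>1 \<sigma>2 m0 h2 (u @ [d]) = cstep \<sigma>1 \<sigma>2 m0 (k, x1, x2) d" using st by simp
    show ?thesis
    proof (intro conjI impI)
      assume T: "fst (cstep \<sigma>1 \<sigma>2 m0 (k, x1, x2) d)"
      have R: "\<sigma>1 x1 = ccur \<sigma>1 \<sigma>2 (k, x1, x2) \<and> d \<in> D1 (\<sigma>1 x1) \<and> cstep \<sigma>1 \<sigma>2 m0 (k, x1, x2) d = (True, x1 @ [d], x2)"
        using cs T by blast
      show "\<sigma>1 x1 = ?\<sigma> u" using R cu by simp
      show "d \<in> D1 (\<sigma>1 x1)" using R by blast
      show "cons_h D1 \<sigma>1 x1" by (rule I(1))
      show "cst \<sigma>1 \<sigma>2 m0 h2 (u @ [d]) = (True, x1 @ [d], x2)" using R e by simp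
    next
      assume T: "\<not> fst (cstep \<sigma>1 \<sigma>2 m0 (k, x1, x2) d)"
      have R: "\<sigma>2 x2 = ccur \<sigma>1 \<sigma>2 (k, x1, x2) \<and> d \<in> D2 (\<sigma>2 x2) \<and> cstep \<sigma>1 \<sigma>2 m0 (k, x1, x2) d = (False, x1, x2 @ [d])"
        using cs T by blast
      show "\<sigma>2 x2 = ?\<sigma> u" using R cu by simp
      show "d \<in> D2 (\<sigma>2 x2)" using R by blast
      show "cons_h D2 \<sigma>2 x2" by (rule I(2))
      show "cst \<sigma>1 \<sigma>2 m0 h2 (u @ [d]) = (False, x1, x2 @ [d])" using R e by simp
    qed
  qed
  show ?thesis unfolding eve_def
  proof (intro conjI allI impI)
    have "?\<sigma> [] = \<sigma>1 []" by (simp add: comb_def ccur_def)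
    then show "?\<sigma> [] \<in> Mv A B" "fst (fst (?\<sigma> [])) = init A" "fst (snd (?\<sigma> [])) = init B"
      using e1 unfolding eve_def by auto
  next
    fix u d assume c: "cons_h D ?\<sigma> u" and d: "d \<in> D (?\<sigma> u)"
    obtain k x1 x2 where st: "cst \<sigma>1 \<sigma>2 m0 h2 u = (k, x1, x2)" by (cases "cst \<sigma>1 \<sigma>2 m0 h2 u") auto
    note S = stp[OF c d st]
    have "?\<sigma> (u @ [d]) \<in> Mv A B \<and> fst (fst (?\<sigma> (u @ [d]))) = tgt d (fst (?\<sigma> u)) \<and>
        fst (snd (?\<sigma> (u @ [d]))) = tgt d (snd (?\<sigma> u))"
    proof (cases "fst (cstep \<sigma>1 \<sigma>2 m0 (k, x1, x2) d)")
      case True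
      then have S': "\<sigma>1 x1 = ?\<sigma> u" "d \<in> D1 (\<sigma>1 x1)" "cons_h D1 \<sigma>1 x1"
        "cst \<sigma>1 \<sigma>2 m0 h2 (u @ [d]) = (True, x1 @ [d], x2)" using S by auto
      have "?\<sigma> (u @ [d]) = \<sigma>1 (x1 @ [d])" using S'(4) by (simp add: comb_def ccur_def)
      then show ?thesis using e1 S' unfolding eve_def by metis
    next
      case False
      then have S': "\<sigma>2 x2 = ?\<sigma> u" "d \<in> D2 (\<sigma>2 x2)" "cons_h D2 \<sigma>2 x2"
        "cst \<sigma>1 \<sigma>2 m0 h2 (u @ [d]) = (False, x1, x2 @ [d])" using S by auto
      have "?\<sigma> (u @ [d]) = \<sigma>2 (x2 @ [d])" using S'(4) by (simp add: comb_def ccur_def)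
      then show ?thesis using e2 S' unfolding eve_def by metis
    qed
    then show "?\<sigma> (u @ [d]) \<in> Mv A B" "fst (fst (?\<sigma> (u @ [d]))) = tgt d (fst (?\<sigma> u))"
        "fst (snd (?\<sigma> (u @ [d]))) = tgt d (snd (?\<sigma> u))" by auto
  next
    fix br assume bc: "\<forall>n. br n \<in> D (?\<sigma> (pfx br n))"
    define K where "K n = fst (cst \<sigma>1 \<sigma>2 m0 h2 (pfx br n))" for n
    define X1 where "X1 n = fst (snd (cst \<sigma>1 \<sigma>2 m0 h2 (pfx br n)))" for n
    define X2 where "X2 n = snd (snd (cst \<sigma>1 \<sigma>2 m0 h2 (pfx br n)))" for n
    have stn: "cst \<sigma>1 \<sigma>2 m0 h2 (pfx br n) = (K n, X1 n, X2 n)" for n by (simp add: K_def X1_def X2_def)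
    have cn: "cons_h D ?\<sigma> (pfx br n)" for n using bc cons_pfx by blast
    have In: "cons_h D1 \<sigma>1 (X1 n) \<and> cons_h D2 \<sigma>2 (X2 n)" for n using inv[OF cn stn] by auto
    have rec: "X1 (Suc n) = (if K (Suc n) then X1 n @ [br n] else X1 n) \<and>
               X2 (Suc n) = (if K (Suc n) then X2 n else X2 n @ [br n])" for n
    proof -
      note S = stp[OF cn[of n] bc[rule_format, of n] stn[of n]]
      have e: "cst \<sigma>1 \<sigma>2 m0 h2 (pfx br (Suc n)) = cst \<sigma>1 \<sigma>2 m0 h2 (pfx br n @ [br n])" by simp
      show ?thesis
      proof (cases "fst (cstep \<sigma>1 \<sigma>2 m0 (K n, X1 n, X2 n) (br n))")
        case True
        then have "(K (Suc n), X1 (Suc n), X2 (Suc n)) = (True, X1 n @ [br n], X2 n)" using S e stn[of "Suc n"] by auto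
        then show ?thesis by auto
      next
        case False
        then have "(K (Suc n), X1 (Suc n), X2 (Suc n)) = (False, X1 n, X2 n @ [br n])" using S e stn[of "Suc n"] by auto
        then show ?thesis by auto
      qed
    qed
    have gv: "?\<sigma> (pfx br n) = (if K n then \<sigma>1 (X1 n) else \<sigma>2 (X2 n))" for n
      using stn[of n] by (simp add: comb_def ccur_def)
    have M1: "cons_h D1 \<sigma>1 u \<Longrightarrow> \<sigma>1 u \<in> Mv A B" for u using eve_M[OF e1] .
    have M2: "cons_h D2 \<sigma>2 u \<Longrightarrow> \<sigma>2 u \<in> Mv A B" for u using eve_M[OF e2] .
    show "parity_accepting (\<lambda>n. pri A (fst (fst (?\<sigma> (pfx br n)))))"
    proof (rule interleave_strat[where f = "\<lambda>m. pri A (fst (fst m))" and F = "pri A ` states A"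
          and K = K and Xa = X1 and Xb = X2 and br = br and Da = D1 and Db = D2 and sa = \<sigma>1 and sb = \<sigma>2])
      show "\<And>b. \<forall>n. b n \<in> D1 (\<sigma>1 (pfx b n)) \<Longrightarrow> parity_accepting (\<lambda>n. pri A (fst (fst (\<sigma>1 (pfx b n)))))"
        using e1 unfolding eve_def by blast
      show "\<And>b. \<forall>n. b n \<in> D2 (\<sigma>2 (pfx b n)) \<Longrightarrow> parity_accepting (\<lambda>n. pri A (fst (fst (\<sigma>2 (pfx b n)))))"
        using e2 unfolding eve_def by blast
      show "\<And>u. cons_h D1 \<sigma>1 u \<Longrightarrow> pri A (fst (fst (\<sigma>1 u))) \<in> pri A ` states A"
        using M1 wf_src[OF wfA] by (auto simp: Mv_def)
      show "\<And>u. cons_h D2 \<sigma>2 u \<Longrightarrow> pri A (fst (fst (\<sigma>2 u))) \<in> pri A ` states A"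
        using M2 wf_src[OF wfA] by (auto simp: Mv_def)
      show "finite (pri A ` states A)" using wfA by (simp add: wf_npta_def)
    qed (use rec In gv in auto)
    show "parity_accepting (\<lambda>n. pri B (fst (snd (?\<sigma> (pfx br n)))))"
    proof (rule interleave_strat[where f = "\<lambda>m. pri B (fst (snd m))" and F = "pri B ` states B"
          and K = K and Xa = X1 and Xb = X2 and br = br and Da = D1 and Db = D2 and sa = \<sigma>1 and sb = \<sigma>2])
      show "\<And>b. \<forall>n. b n \<in> D1 (\<sigma>1 (pfx b n)) \<Longrightarrow> parity_accepting (\<lambda>n. pri B (fst (snd (\<sigma>1 (pfx b n)))))"
        using e1 unfolding eve_def by blast
      show "\<And>b. \<forall>n. b n \<in> D2 (\<sigma>2 (pfx b n)) \<Longrightarrow> parity_accepting (\<lambda>n. pri B (fst (snd (\<sigma>2 (pfx b n)))))"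
        using e2 unfolding eve_def by blast
      show "\<And>u. cons_h D1 \<sigma>1 u \<Longrightarrow> pri B (fst (snd (\<sigma>1 u))) \<in> pri B ` states B"
        using M1 wf_src[OF wfB] by (auto simp: Mv_def)
      show "\<And>u. cons_h D2 \<sigma>2 u \<Longrightarrow> pri B (fst (snd (\<sigma>2 u))) \<in> pri B ` states B"
        using M2 wf_src[OF wfB] by (auto simp: Mv_def)
      show "finite (pri B ` states B)" using wfB by (simp add: wf_npta_def)
    qed (use rec In gv in auto)
  qed
qed

lemma dir_single: "S \<noteq> {} \<Longrightarrow> S \<noteq> (UNIV :: dir set) \<Longrightarrow> \<exists>d. S = {d}"
proof -
  assume a: "S \<noteq> {}" "S \<noteq> UNIV"
  have U: "(UNIV :: dir set) = {L, R}" using dir.exhaust by auto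
  show ?thesis
  proof (cases "L \<in> S")
    case True
    have "R \<notin> S"
    proof
      assume "R \<in> S" then have "UNIV \<subseteq> S" using True by (metis dir.exhaust subsetI)
      then show False using a by auto
    qed
    then have "S = {L}" using True U by (metis dir.exhaust insertE insertI1 subsetI subset_antisym singletonD)
    then show ?thesis by blast
  next
    case False
    then have "R \<in> S" using a(1) by (metis dir.exhaust ex_in_conv)
    then have "S = {R}" using False by (metis dir.exhaust insertE insertI1 subsetI subset_antisym singletonD)
    then show ?thesis by blast
  qed
qed

lemma finite_Mv: "wf_npta A \<Longrightarrow> wf_npta B \<Longrightarrow> finite (Mv A B)"
proof -
  assume wA: "wf_npta A" and wB: "wf_npta B"
  have "finite (trans A)" using wA unfolding wf_npta_def by (meson finite_SigmaI finite_subset)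
  moreover have "finite (trans B)" using wB unfolding wf_npta_def by (meson finite_SigmaI finite_subset)
  moreover have "Mv A B \<subseteq> trans A \<times> trans B" by (auto simp: Mv_def)
  ultimately show ?thesis by (meson finite_SigmaI finite_subset)
qed

lemma base:
  fixes A :: "('a, 'q) npta" and B :: "('a, 'p) npta"
  assumes sing: "\<forall>m\<in>Mv A B. \<exists>d. D m = {d}"
  shows "(\<exists>P. adam A B P) \<or> (\<exists>\<sigma>. eve A B D \<sigma>)"
proof -
  define P0 where "P0 = (\<lambda>x y. SOME d. d \<in> D (x, y))"
  show ?thesis
  proof (cases "adam A B P0")
  case True then show ?thesis by blast
next
  case False
  then obtain b \<delta>A \<delta>B where dA: "\<delta>A \<in> trans_seqs A b" and dB: "\<delta>B \<in> trans_seqs B b"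
    and P': "\<forall>i. P0 (\<delta>A i) (\<delta>B i) = snd (b i)"
    and acc: "\<not> seq_rejecting A \<delta>A" "\<not> seq_rejecting B \<delta>B"
    unfolding adam_def by blast
  have P: "\<forall>i. (SOME d. d \<in> D (\<delta>A i, \<delta>B i)) = snd (b i)" using P' by (simp add: P0_def)
  define \<sigma> where "\<sigma> (u :: dir list) = (\<delta>A (length u), \<delta>B (length u))" for u
  have M: "\<sigma> u \<in> Mv A B" for u using dA dB by (simp add: \<sigma>_def Mv_def trans_seqs_def)
  have dirs: "d = snd (b (length u))" if "d \<in> D (\<sigma> u)" for u d
  proof -
    obtain d0 where d0: "D (\<sigma> u) = {d0}" using sing M by blast
    have "(SOME d. d \<in> D (\<sigma> u)) = d0" using d0 by simp
    then show ?thesis using P that d0 by (simp add: \<sigma>_def)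
  qed
  have "eve A B D \<sigma>" unfolding eve_def
  proof (intro conjI allI impI)
    show "\<sigma> [] \<in> Mv A B" by (rule M)
    show "fst (fst (\<sigma> [])) = init A" "fst (snd (\<sigma> [])) = init B"
      using dA dB by (simp_all add: \<sigma>_def trans_seqs_def)
  next
    fix u d assume "cons_h D \<sigma> u" "d \<in> D (\<sigma> u)"
    then have d: "d = snd (b (length u))" using dirs by blast
    show "\<sigma> (u @ [d]) \<in> Mv A B" by (rule M)
    show "fst (fst (\<sigma> (u @ [d]))) = tgt d (fst (\<sigma> u))"
      using dA d by (simp add: \<sigma>_def trans_seqs_def tgt_def)
    show "fst (snd (\<sigma> (u @ [d]))) = tgt d (snd (\<sigma> u))"
      using dB d by (simp add: \<sigma>_def trans_seqs_def tgt_def)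
  next
    fix br
    show "parity_accepting (\<lambda>n. pri A (fst (fst (\<sigma> (pfx br n)))))"
      using acc(1) by (simp add: \<sigma>_def seq_rejecting_def)
    show "parity_accepting (\<lambda>n. pri B (fst (snd (\<sigma> (pfx br n)))))"
      using acc(2) by (simp add: \<sigma>_def seq_rejecting_def)
  qed
  then show ?thesis by blast
qed
qed

lemma main_ind:
  fixes A :: "('a, 'q) npta" and B :: "('a, 'p) npta"
  assumes wfA: "wf_npta A" and wfB: "wf_npta B"
  shows "\<forall>D. (\<forall>m\<in>Mv A B. D m \<noteq> {}) \<longrightarrow> card {m\<in>Mv A B. D m = UNIV} = n \<longrightarrow>
     (\<exists>P. adam A B P) \<or> (\<exists>\<sigma>. eve A B D \<sigma>)"
proof (induction n)
  case 0
  show ?case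
  proof (intro allI impI)
    fix D :: "(('q \<times> 'a \<times> 'q \<times> 'q) \<times> ('p \<times> 'a \<times> 'p \<times> 'p)) \<Rightarrow> dir set"
    assume ne: "\<forall>m\<in>Mv A B. D m \<noteq> {}" and c: "card {m\<in>Mv A B. D m = UNIV} = 0"
    have "finite {m\<in>Mv A B. D m = UNIV}" using finite_Mv[OF wfA wfB] by simp
    then have "{m\<in>Mv A B. D m = UNIV} = {}" using c by simp
    then have "\<forall>m\<in>Mv A B. \<exists>d. D m = {d}" using ne dir_single by blast
    then show "(\<exists>P. adam A B P) \<or> (\<exists>\<sigma>. eve A B D \<sigma>)" by (rule base)
  qed
next
  case (Suc n)
  show ?case
  proof (intro allI impI)
    fix D :: "(('q \<times> 'a \<times> 'q \<times> 'q) \<times> ('p \<times> 'a \<times> 'p \<times> 'p)) \<Rightarrow> dir set"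
    assume ne: "\<forall>m\<in>Mv A B. D m \<noteq> {}" and c: "card {m\<in>Mv A B. D m = UNIV} = Suc n"
    have fin: "finite {m\<in>Mv A B. D m = UNIV}" using finite_Mv[OF wfA wfB] by simp
    obtain m0 where m0: "m0 \<in> Mv A B" "D m0 = UNIV" proof -
      have "{m\<in>Mv A B. D m = UNIV} \<noteq> {}" using c by (metis card.empty nat.distinct(1))
      then show ?thesis using that by blast
    qed
    define D1 where "D1 = D(m0 := {L})"
    define D2 where "D2 = D(m0 := {R})"
    have LU: "{L} \<noteq> (UNIV :: dir set)" "{R} \<noteq> (UNIV :: dir set)" by auto
    have "{m\<in>Mv A B. D1 m = UNIV} = {m\<in>Mv A B. D m = UNIV} - {m0}" using LU by (auto simp: D1_def)
    then have c1: "card {m\<in>Mv A B. D1 m = UNIV} = n" using c fin m0 by simp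
    have "{m\<in>Mv A B. D2 m = UNIV} = {m\<in>Mv A B. D m = UNIV} - {m0}" using LU by (auto simp: D2_def)
    then have c2: "card {m\<in>Mv A B. D2 m = UNIV} = n" using c fin m0 by simp
    have ne1: "\<forall>m\<in>Mv A B. D1 m \<noteq> {}" using ne by (simp add: D1_def)
    have ne2: "\<forall>m\<in>Mv A B. D2 m \<noteq> {}" using ne by (simp add: D2_def)
    show "(\<exists>P. adam A B P) \<or> (\<exists>\<sigma>. eve A B D \<sigma>)"
    proof (cases "\<exists>P. adam A B P")
      case True then show ?thesis by blast
    next
      case False
      obtain \<sigma>1 where e1: "eve A B D1 \<sigma>1" using Suc.IH ne1 c1 False by blast
      obtain \<sigma>2 where e2: "eve A B D2 \<sigma>2" using Suc.IH ne2 c2 False by blast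
      have U: "D m0 = UNIV" "D1 m0 = {L}" "D2 m0 = {R}" "\<forall>m. m \<noteq> m0 \<longrightarrow> D1 m = D m" "\<forall>m. m \<noteq> m0 \<longrightarrow> D2 m = D m"
        using m0 by (auto simp: D1_def D2_def)
      show ?thesis
      proof (cases "\<exists>h2. cons_h D2 \<sigma>2 h2 \<and> \<sigma>2 h2 = m0")
        case True
        then obtain h2 where "cons_h D2 \<sigma>2 h2" "\<sigma>2 h2 = m0" by blast
        then have "eve A B D (comb \<sigma>1 \<sigma>2 m0 h2)" using comb_wins[OF wfA wfB e1 e2 U] by blast
        then show ?thesis by blast
      next
        case False
        have "eve A B D \<sigma>2" using eve_mono[of A B D2 \<sigma>2 m0 D] e2 U(5) False by blast
        then show ?thesis by blast
      qed
    qed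
  qed
qed

lemma eve_tree:
  fixes A :: "('a, 'q) npta" and B :: "('a, 'p) npta"
  assumes wfA: "wf_npta A" and wfB: "wf_npta B" and al: "alph A = alph B"
    and e: "eve A B (\<lambda>_. UNIV) \<sigma>"
  shows "\<exists>t. t \<in> lang A \<and> t \<in> lang B"
proof -
  have cons: "cons_h (\<lambda>_. UNIV) \<sigma> u" for u by (simp add: cons_h_def)
  have M: "\<sigma> u \<in> Mv A B" for u using eve_M[OF e cons] .
  have nxt: "fst (fst (\<sigma> (u @ [d]))) = tgt d (fst (\<sigma> u)) \<and> fst (snd (\<sigma> (u @ [d]))) = tgt d (snd (\<sigma> u))" for u d
    using e cons unfolding eve_def by blast
  have acc: "parity_accepting (\<lambda>n. pri A (fst (fst (\<sigma> (pfx br n))))) \<and>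
        parity_accepting (\<lambda>n. pri B (fst (snd (\<sigma> (pfx br n)))))" for br
    using e unfolding eve_def by blast
  define t where "t u = fst (snd (fst (\<sigma> u)))" for u
  have tB: "t u = fst (snd (snd (\<sigma> u)))" for u using M[of u] by (simp add: t_def Mv_def)
  have trA: "(fst (fst (\<sigma> u)), t u, fst (fst (\<sigma> (u @ [L]))), fst (fst (\<sigma> (u @ [R])))) \<in> trans A" for u
  proof -
    have "(fst (fst (\<sigma> u)), t u, fst (fst (\<sigma> (u @ [L]))), fst (fst (\<sigma> (u @ [R])))) = fst (\<sigma> u)"
      using nxt[of u L] nxt[of u R] by (simp add: t_def tgt_def prod_eq_iff)
    then show ?thesis using M[of u] by (simp add: Mv_def)
  qed
  have trB: "(fst (snd (\<sigma> u)), t u, fst (snd (\<sigma> (u @ [L]))), fst (snd (\<sigma> (u @ [R])))) \<in> trans B" for u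
  proof -
    have "(fst (snd (\<sigma> u)), t u, fst (snd (\<sigma> (u @ [L]))), fst (snd (\<sigma> (u @ [R])))) = snd (\<sigma> u)"
      using nxt[of u L] nxt[of u R] by (simp add: tB tgt_def prod_eq_iff)
    then show ?thesis using M[of u] by (simp add: Mv_def)
  qed
  have tree: "t u \<in> alph A" for u
  proof -
    have "fst (\<sigma> u) \<in> trans A" using M[of u] by (simp add: Mv_def)
    then show ?thesis using wf_src[OF wfA, of "fst (\<sigma> u)"] unfolding t_def by blast
  qed
  have "t \<in> lang A"
    unfolding lang_def is_tree_def accepts_from_def
  proof (intro CollectI conjI allI exI[of _ "\<lambda>u. fst (fst (\<sigma> u))"])
    show "t u \<in> alph A" for u by (rule tree)
    show "fst (fst (\<sigma> [])) = init A" using e by (simp add: eve_def)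
    show "(fst (fst (\<sigma> u)), t u, fst (fst (\<sigma> (u @ [L]))), fst (fst (\<sigma> (u @ [R])))) \<in> trans A" for u by (rule trA)
    show "parity_accepting (\<lambda>n. pri A (fst (fst (\<sigma> (map br [0..<n])))))" for br
      using acc[of br] by (simp add: pfx_def)
  qed
  moreover have "t \<in> lang B"
    unfolding lang_def is_tree_def accepts_from_def
  proof (intro CollectI conjI allI exI[of _ "\<lambda>u. fst (snd (\<sigma> u))"])
    show "t u \<in> alph B" for u using tree al by simp
    show "fst (snd (\<sigma> [])) = init B" using e by (simp add: eve_def)
    show "(fst (snd (\<sigma> u)), t u, fst (snd (\<sigma> (u @ [L]))), fst (snd (\<sigma> (u @ [R])))) \<in> trans B" for u by (rule trB)
    show "parity_accepting (\<lambda>n. pri B (fst (snd (\<sigma> (map br [0..<n])))))" for br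
      using acc[of br] by (simp add: pfx_def)
  qed
  ultimately show ?thesis by blast
qed

theorem mainTheorem4:
  fixes A :: "('a, 'q) npta" and B :: "('a, 'p) npta"
  assumes "wf_npta A" and "wf_npta B" and "alph A = alph B"
    and "all_productive A" and "all_productive B"
    and "lang A \<inter> lang B = {}"
  shows "\<exists>P :: ('q \<times> 'a \<times> 'q \<times> 'q) \<Rightarrow> ('p \<times> 'a \<times> 'p \<times> 'p) \<Rightarrow> dir.
     \<forall>b :: nat \<Rightarrow> 'a \<times> dir. (\<forall>i. fst (b i) \<in> alph A) \<longrightarrow>
       (\<forall>\<delta>A \<in> trans_seqs A b. \<forall>\<delta>B \<in> trans_seqs B b.
          (\<forall>i. P (\<delta>A i) (\<delta>B i) = snd (b i)) \<longrightarrow>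
          seq_rejecting A \<delta>A \<or> seq_rejecting B \<delta>B)"
proof -
  have ne: "\<And>m. m \<in> Mv A B \<Longrightarrow> (\<lambda>_. UNIV :: dir set) m \<noteq> {}" by simp
  have "(\<exists>P. adam A B P) \<or> (\<exists>\<sigma>. eve A B (\<lambda>_. UNIV) \<sigma>)"
    by (rule main_ind[OF assms(1,2), rule_format, of "\<lambda>_. UNIV", OF ne refl])
  moreover have "\<not> (\<exists>\<sigma>. eve A B (\<lambda>_. UNIV) \<sigma>)"
  proof
    assume "\<exists>\<sigma>. eve A B (\<lambda>_. UNIV) \<sigma>"
    then obtain \<sigma> where "eve A B (\<lambda>_. UNIV) \<sigma>" by blast
    then obtain t where "t \<in> lang A" "t \<in> lang B" using eve_tree[OF assms(1,2,3)] by blast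
    then show False using assms(6) by blast
  qed
  ultimately obtain P where "adam A B P" by blast
  then show ?thesis unfolding adam_def by (rule exI[of _ P])
qed


end
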